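(* Let $(X,r)$ be a non-degenerate involutive set-theoretic solution with $|X|=n$, identified with $\{1,\dots,n\}$, with table $\mathcal{T}$, and let $(\mathcal{X}^2,\tilde r)$ be the induced pair. Let $\mathrm{Orb}(T_1^1)$ be the orbit of $T_1^1$ under the action of the structure group $G(\mathcal{X}^2,\tilde r)$ on $\mathcal{X}^2$. The following are equivalent: (i) $(\mathcal{X}^2,\tilde r)$ is indecomposable; (ii) $\mathrm{Orb}(T_1^1)=\mathcal{X}^2$; (iii) for every $1\le s,m\le n$ there exist a natural number $\ell$ and $1\le i_1,\dots,i_\ell,k_1,\dots,k_\ell\le n$ such that $\sigma_{i_1}\sigma_{i_2}\cdots\sigma_{i_\ell}(1)=s$ and $\sigma_{k_1}\sigma_{k_2}\cdots\sigma_{k_\ell}(1)=m$; (iv) for every $1\le s,m\le n$ there exists a natural number $\ell$ such that $s$ and $m$ both appear in column $\ell$ of $\mathcal{T}$.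
   Context: A set-theoretic solution is $r:X\times X\to X\times X$, $r(x,y)=(\sigma_x(y),\gamma_y(x))$, with $r^{12}r^{23}r^{12}=r^{23}r^{12}r^{23}$; non-degenerate: all $\sigma_x,\gamma_x$ bijective; involutive: $r\circ r=\mathrm{Id}$. Induced pair: $\mathcal{X}^2=\{T_i^k:1\le i,k\le n\}$ ($n^2$ symbols), $\tilde r(T_i^k,T_j^l)=(g_i^k(T_j^l),f_j^l(T_i^k))$ with $g_i^k(T_j^l)=T_{\sigma_i(j)}^{\sigma_k(l)}$, $f_j^l(T_i^k)=T_{\gamma_j(i)}^{\gamma_l(k)}$; it is a non-degenerate involutive solution. The structure group of a solution $(Y,s)$ with $s(x,y)=(\alpha_x(y),\beta_y(x))$ is $G(Y,s)=\langle Y\mid xy=\alpha_x(y)\beta_y(x),\ x,y\in Y\rangle$; it acts on $Y$ with generator $x$ acting as $\alpha_x$ (so for $G(\mathcal{X}^2,\tilde r)$, the generator $T_i^k$ acts as $g_i^k$). A subset $Z$ is non-degenerate invariant if $s(Z\times Z)\subseteq Z\times Z$ and the restriction is a non-degenerate involutive solution; a solution is decomposable if it is a union of two non-empty disjoint non-degenerate invariant subsets, indecomposable otherwise. The table $\mathcal{T}$ of $(X,r)$ has columns indexed by natural numbers $\ell\ge1$, and column $\ell$ consists of all $s\in X$ for which there exist $1\le i_1,\dots,i_\ell\le n$ with $\sigma_{i_1}\sigma_{i_2}\cdots\sigma_{i_\ell}(1)=s$. *)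

theory Defs
  imports Main
begin

text \<open>A map s(x,y) = (alpha x y, beta y x) on a carrier Y.\<close>

definition braid_on :: "'a set \<Rightarrow> ('a \<Rightarrow> 'a \<Rightarrow> 'a) \<Rightarrow> ('a \<Rightarrow> 'a \<Rightarrow> 'a) \<Rightarrow> bool" where
  "braid_on Y \<alpha> \<beta> \<longleftrightarrow>
     (\<forall>x\<in>Y. \<forall>y\<in>Y. \<alpha> x y \<in> Y \<and> \<beta> y x \<in> Y) \<and>
     (\<forall>x\<in>Y. \<forall>y\<in>Y. \<forall>z\<in>Y.
        \<comment> \<open>r12 r23 r12 (x,y,z) = r23 r12 r23 (x,y,z)\<close>
        (let (a1, b1) = (\<alpha> x y, \<beta> y x);
             (b2, c2) = (\<alpha> b1 z, \<beta> z b1);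
             (a3, b3) = (\<alpha> a1 b2, \<beta> b2 a1);
             (p1, q1) = (\<alpha> y z, \<beta> z y);
             (x2, p2) = (\<alpha> x p1, \<beta> p1 x);
             (p3, q3) = (\<alpha> p2 q1, \<beta> q1 p2)
         in (a3, b3, c2) = (x2, p3, q3)))"

definition nondegenerate_on :: "'a set \<Rightarrow> ('a \<Rightarrow> 'a \<Rightarrow> 'a) \<Rightarrow> ('a \<Rightarrow> 'a \<Rightarrow> 'a) \<Rightarrow> bool" where
  "nondegenerate_on Y \<alpha> \<beta> \<longleftrightarrow> (\<forall>x\<in>Y. bij_betw (\<alpha> x) Y Y \<and> bij_betw (\<beta> x) Y Y)"

definition involutive_on :: "'a set \<Rightarrow> ('a \<Rightarrow> 'a \<Rightarrow> 'a) \<Rightarrow> ('a \<Rightarrow> 'a \<Rightarrow> 'a) \<Rightarrow> bool" where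
  "involutive_on Y \<alpha> \<beta> \<longleftrightarrow>
     (\<forall>x\<in>Y. \<forall>y\<in>Y. \<alpha> (\<alpha> x y) (\<beta> y x) = x \<and> \<beta> (\<beta> y x) (\<alpha> x y) = y)"

definition nd_inv_solution :: "'a set \<Rightarrow> ('a \<Rightarrow> 'a \<Rightarrow> 'a) \<Rightarrow> ('a \<Rightarrow> 'a \<Rightarrow> 'a) \<Rightarrow> bool" where
  "nd_inv_solution Y \<alpha> \<beta> \<longleftrightarrow> braid_on Y \<alpha> \<beta> \<and> nondegenerate_on Y \<alpha> \<beta> \<and> involutive_on Y \<alpha> \<beta>"

definition nd_invariant :: "'a set \<Rightarrow> ('a \<Rightarrow> 'a \<Rightarrow> 'a) \<Rightarrow> ('a \<Rightarrow> 'a \<Rightarrow> 'a) \<Rightarrow> 'a set \<Rightarrow> bool" where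
  "nd_invariant Y \<alpha> \<beta> Z \<longleftrightarrow> Z \<subseteq> Y \<and>
     (\<forall>x\<in>Z. \<forall>y\<in>Z. \<alpha> x y \<in> Z \<and> \<beta> y x \<in> Z) \<and> nd_inv_solution Z \<alpha> \<beta>"

definition decomposable :: "'a set \<Rightarrow> ('a \<Rightarrow> 'a \<Rightarrow> 'a) \<Rightarrow> ('a \<Rightarrow> 'a \<Rightarrow> 'a) \<Rightarrow> bool" where
  "decomposable Y \<alpha> \<beta> \<longleftrightarrow> (\<exists>Z1 Z2. Z1 \<noteq> {} \<and> Z2 \<noteq> {} \<and> Z1 \<inter> Z2 = {} \<and> Z1 \<union> Z2 = Y \<and>
      nd_invariant Y \<alpha> \<beta> Z1 \<and> nd_invariant Y \<alpha> \<beta> Z2)"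

definition indecomposable :: "'a set \<Rightarrow> ('a \<Rightarrow> 'a \<Rightarrow> 'a) \<Rightarrow> ('a \<Rightarrow> 'a \<Rightarrow> 'a) \<Rightarrow> bool" where
  "indecomposable Y \<alpha> \<beta> \<longleftrightarrow> \<not> decomposable Y \<alpha> \<beta>"

text \<open>Orbit of y under the action of the structure group G(Y,s), generated by the
  generators x \<in> Y acting as alpha_x (and their inverses, acting as alpha_x^{-1}).\<close>
inductive_set struct_orbit :: "'a set \<Rightarrow> ('a \<Rightarrow> 'a \<Rightarrow> 'a) \<Rightarrow> 'a \<Rightarrow> 'a set"
  for Y :: "'a set" and \<alpha> :: "'a \<Rightarrow> 'a \<Rightarrow> 'a" and y :: 'a where
  base: "y \<in> struct_orbit Y \<alpha> y"
| gen: "z \<in> struct_orbit Y \<alpha> y \<Longrightarrow> x \<in> Y \<Longrightarrow> \<alpha> x z \<in> struct_orbit Y \<alpha> y"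
| gen_inv: "z \<in> struct_orbit Y \<alpha> y \<Longrightarrow> x \<in> Y \<Longrightarrow> inv_into Y (\<alpha> x) z \<in> struct_orbit Y \<alpha> y"

text \<open>Induced pair on X^2: T_i^k is the pair (i,k).\<close>
definition ind_g :: "(nat \<Rightarrow> nat \<Rightarrow> nat) \<Rightarrow> nat \<times> nat \<Rightarrow> nat \<times> nat \<Rightarrow> nat \<times> nat" where
  "ind_g \<sigma> T U = (\<sigma> (fst T) (fst U), \<sigma> (snd T) (snd U))"

definition ind_f :: "(nat \<Rightarrow> nat \<Rightarrow> nat) \<Rightarrow> nat \<times> nat \<Rightarrow> nat \<times> nat \<Rightarrow> nat \<times> nat" where
  "ind_f \<gamma> U T = (\<gamma> (fst U) (fst T), \<gamma> (snd U) (snd T))"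

text \<open>sigma_{i_1} ... sigma_{i_l}(1) for the word is = [i_1,...,i_l].\<close>
definition word_apply :: "(nat \<Rightarrow> nat \<Rightarrow> nat) \<Rightarrow> nat list \<Rightarrow> nat \<Rightarrow> nat" where
  "word_apply \<sigma> is x = foldr (\<lambda>i acc. \<sigma> i acc) is x"

definition table_column :: "nat \<Rightarrow> (nat \<Rightarrow> nat \<Rightarrow> nat) \<Rightarrow> nat \<Rightarrow> nat set" where
  "table_column n \<sigma> l = {s \<in> {1..n}. \<exists>is. length is = l \<and> set is \<subseteq> {1..n} \<and> word_apply \<sigma> is 1 = s}"

end

theory Submission
  imports Defs
begin

context
  fixes n :: nat and \<sigma> \<gamma> :: "nat \<Rightarrow> nat \<Rightarrow> nat"
  assumes n1: "n \<ge> 1" and sol: "nd_inv_solution {1..n} \<sigma> \<gamma>"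
begin

lemma sig_bij: "x \<in> {1..n} \<Longrightarrow> bij_betw (\<sigma> x) {1..n} {1..n}"
  using sol unfolding nd_inv_solution_def nondegenerate_on_def by blast
lemma gam_bij: "x \<in> {1..n} \<Longrightarrow> bij_betw (\<gamma> x) {1..n} {1..n}"
  using sol unfolding nd_inv_solution_def nondegenerate_on_def by blast
lemma invol: "x \<in> {1..n} \<Longrightarrow> y \<in> {1..n} \<Longrightarrow> \<sigma> (\<sigma> x y) (\<gamma> y x) = x \<and> \<gamma> (\<gamma> y x) (\<sigma> x y) = y"
  using sol unfolding nd_inv_solution_def involutive_on_def by blast
lemma braid1: "x \<in> {1..n} \<Longrightarrow> y \<in> {1..n} \<Longrightarrow> z \<in> {1..n} \<Longrightarrow>
   \<sigma> (\<sigma> x y) (\<sigma> (\<gamma> y x) z) = \<sigma> x (\<sigma> y z) \<and>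
   \<gamma> (\<sigma> (\<gamma> y x) z) (\<sigma> x y) = \<sigma> (\<gamma> (\<sigma> y z) x) (\<gamma> z y) \<and>
   \<gamma> z (\<gamma> y x) = \<gamma> (\<gamma> z y) (\<gamma> (\<sigma> y z) x)"
proof -
  assume m: "x \<in> {1..n}" "y \<in> {1..n}" "z \<in> {1..n}"
  have b: "braid_on {1..n} \<sigma> \<gamma>" using sol unfolding nd_inv_solution_def by blast
  have "\<forall>x\<in>{1..n}. \<forall>y\<in>{1..n}. \<forall>z\<in>{1..n}.
        (let (a1, b1) = (\<sigma> x y, \<gamma> y x);
             (b2, c2) = (\<sigma> b1 z, \<gamma> z b1);
             (a3, b3) = (\<sigma> a1 b2, \<gamma> b2 a1);
             (p1, q1) = (\<sigma> y z, \<gamma> z y);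
             (x2, p2) = (\<sigma> x p1, \<gamma> p1 x);
             (p3, q3) = (\<sigma> p2 q1, \<gamma> q1 p2)
         in (a3, b3, c2) = (x2, p3, q3))"
    using b unfolding braid_on_def by (elim conjE)
  hence "let (a1, b1) = (\<sigma> x y, \<gamma> y x);
             (b2, c2) = (\<sigma> b1 z, \<gamma> z b1);
             (a3, b3) = (\<sigma> a1 b2, \<gamma> b2 a1);
             (p1, q1) = (\<sigma> y z, \<gamma> z y);
             (x2, p2) = (\<sigma> x p1, \<gamma> p1 x);
             (p3, q3) = (\<sigma> p2 q1, \<gamma> q1 p2)
         in (a3, b3, c2) = (x2, p3, q3)" using m by blast
  thus ?thesis by (simp add: Let_def)
qed

lemma sig_in: "x \<in> {1..n} \<Longrightarrow> y \<in> {1..n} \<Longrightarrow> \<sigma> x y \<in> {1..n}"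
  by (rule bij_betw_apply[OF sig_bij])
lemma gam_in: "x \<in> {1..n} \<Longrightarrow> y \<in> {1..n} \<Longrightarrow> \<gamma> x y \<in> {1..n}"
  by (rule bij_betw_apply[OF gam_bij])

abbreviation "XX \<equiv> {1..n} \<times> {1..n}"

lemma g_into: "W \<in> XX \<Longrightarrow> V \<in> XX \<Longrightarrow> ind_g \<sigma> W V \<in> XX"
  by (simp only: ind_g_def mem_Times_iff fst_conv snd_conv) (blast intro: sig_in)
lemma f_into: "W \<in> XX \<Longrightarrow> V \<in> XX \<Longrightarrow> ind_f \<gamma> W V \<in> XX"
  by (simp only: ind_f_def mem_Times_iff fst_conv snd_conv) (blast intro: gam_in)
lemma g_inj: "W \<in> XX \<Longrightarrow> inj_on (ind_g \<sigma> W) XX"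
proof -
  assume W: "W \<in> XX"
  show ?thesis
  proof (rule inj_onI)
    fix a b assume a: "a \<in> XX" and b: "b \<in> XX" and e: "ind_g \<sigma> W a = ind_g \<sigma> W b"
    have e1: "fst a = fst b"
      using inj_onD[OF bij_betw_imp_inj_on[OF sig_bij[of "fst W"]]] e W a b unfolding ind_g_def by auto
    have e2: "snd a = snd b"
      using inj_onD[OF bij_betw_imp_inj_on[OF sig_bij[of "snd W"]]] e W a b unfolding ind_g_def by auto
    show "a = b" using e1 e2 by (rule prod_eqI)
  qed
qed
lemma f_inj: "W \<in> XX \<Longrightarrow> inj_on (ind_f \<gamma> W) XX"
proof -
  assume W: "W \<in> XX"
  show ?thesis
  proof (rule inj_onI)
    fix a b assume a: "a \<in> XX" and b: "b \<in> XX" and e: "ind_f \<gamma> W a = ind_f \<gamma> W b"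
    have e1: "fst a = fst b"
      using inj_onD[OF bij_betw_imp_inj_on[OF gam_bij[of "fst W"]]] e W a b unfolding ind_f_def by auto
    have e2: "snd a = snd b"
      using inj_onD[OF bij_betw_imp_inj_on[OF gam_bij[of "snd W"]]] e W a b unfolding ind_f_def by auto
    show "a = b" using e1 e2 by (rule prod_eqI)
  qed
qed
lemma gf_inv: "T \<in> XX \<Longrightarrow> U \<in> XX \<Longrightarrow> ind_g \<sigma> (ind_g \<sigma> T U) (ind_f \<gamma> U T) = T
   \<and> ind_f \<gamma> (ind_f \<gamma> U T) (ind_g \<sigma> T U) = U"
proof -
  assume TU: "T \<in> XX" "U \<in> XX"
  obtain t1 t2 where t: "T = (t1,t2)" by (cases T)
  obtain u1 u2 where u: "U = (u1,u2)" by (cases U)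
  have m: "t1 \<in> {1..n}" "t2 \<in> {1..n}" "u1 \<in> {1..n}" "u2 \<in> {1..n}" using TU unfolding t u by auto
  note i1 = invol[OF m(1) m(3)] and i2 = invol[OF m(2) m(4)]
  show ?thesis unfolding t u ind_g_def ind_f_def fst_conv snd_conv
    using i1 i2 by simp
qed
lemma g_inv: "T \<in> XX \<Longrightarrow> U \<in> XX \<Longrightarrow> ind_g \<sigma> (ind_g \<sigma> T U) (ind_f \<gamma> U T) = T"
  by (rule conjunct1[OF gf_inv])
lemma f_inv: "T \<in> XX \<Longrightarrow> U \<in> XX \<Longrightarrow> ind_f \<gamma> (ind_f \<gamma> U T) (ind_g \<sigma> T U) = U"
  by (rule conjunct2[OF gf_inv])

lemma endo_bij: "finite A \<Longrightarrow> A \<subseteq> B \<Longrightarrow> inj_on f B \<Longrightarrow> (\<forall>x\<in>A. f x \<in> A) \<Longrightarrow> bij_betw f A A"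
proof -
  assume a: "finite A" "A \<subseteq> B" "inj_on f B" "\<forall>x\<in>A. f x \<in> A"
  have i: "inj_on f A" using inj_on_subset a(2,3) by blast
  have "f ` A \<subseteq> A" using a(4) by blast
  hence "f ` A = A" using endo_inj_surj[OF a(1) _ i] by blast
  thus ?thesis unfolding bij_betw_def using i by blast
qed

definition "fclosed Z \<longleftrightarrow> Z \<subseteq> XX \<and> (\<forall>W\<in>XX. \<forall>V\<in>Z. ind_g \<sigma> W V \<in> Z)"

lemma closed_inv:
  assumes Z: "fclosed Z" "fclosed (XX - Z)"
  shows "nd_invariant XX (ind_g \<sigma>) (ind_f \<gamma>) Z"
proof -
  have sub: "Z \<subseteq> XX" using Z unfolding fclosed_def by blast
  have fin: "finite Z" using sub finite_subset by blast
  have gZ: "\<And>W V. W \<in> XX \<Longrightarrow> V \<in> Z \<Longrightarrow> ind_g \<sigma> W V \<in> Z" using Z unfolding fclosed_def by blast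
  have gZc: "\<And>W V. W \<in> XX \<Longrightarrow> V \<in> XX \<Longrightarrow> V \<notin> Z \<Longrightarrow> ind_g \<sigma> W V \<notin> Z"
    using Z unfolding fclosed_def by blast
  have fZ: "ind_f \<gamma> U T \<in> Z" if "T \<in> Z" "U \<in> Z" for T U
  proof (rule ccontr)
    assume a: "ind_f \<gamma> U T \<notin> Z"
    have "T \<in> XX" "U \<in> XX" using that sub by auto
    hence "ind_g \<sigma> (ind_g \<sigma> T U) (ind_f \<gamma> U T) \<notin> Z"
      using gZc[OF g_into f_into a] by blast
    thus False using g_inv \<open>T \<in> XX\<close> \<open>U \<in> XX\<close> \<open>T \<in> Z\<close> by simp
  qed
  have cl: "\<forall>x\<in>Z. \<forall>y\<in>Z. ind_g \<sigma> x y \<in> Z \<and> ind_f \<gamma> y x \<in> Z"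
    using gZ fZ sub by blast
  have braid: "braid_on Z (ind_g \<sigma>) (ind_f \<gamma>)"
    unfolding braid_on_def
  proof (intro conjI ballI)
    fix x y z assume xyz: "x \<in> Z" "y \<in> Z" "z \<in> Z"
    obtain x1 x2 where ex: "x = (x1,x2)" by (cases x)
    obtain y1 y2 where ey: "y = (y1,y2)" by (cases y)
    obtain z1 z2 where ez: "z = (z1,z2)" by (cases z)
    have "x \<in> XX" "y \<in> XX" "z \<in> XX" using xyz sub by blast+
    hence m: "x1 \<in> {1..n}" "x2 \<in> {1..n}" "y1 \<in> {1..n}" "y2 \<in> {1..n}" "z1 \<in> {1..n}" "z2 \<in> {1..n}"
      unfolding ex ey ez by simp_all
    note e = ex ey ez
    show "let (a1, b1) = (ind_g \<sigma> x y, ind_f \<gamma> y x);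
             (b2, c2) = (ind_g \<sigma> b1 z, ind_f \<gamma> z b1);
             (a3, b3) = (ind_g \<sigma> a1 b2, ind_f \<gamma> b2 a1);
             (p1, q1) = (ind_g \<sigma> y z, ind_f \<gamma> z y);
             (x2, p2) = (ind_g \<sigma> x p1, ind_f \<gamma> p1 x);
             (p3, q3) = (ind_g \<sigma> p2 q1, ind_f \<gamma> q1 p2)
         in (a3, b3, c2) = (x2, p3, q3)"
      using braid1[of x1 y1 z1] braid1[of x2 y2 z2] m unfolding e
      by (simp add: Let_def ind_g_def ind_f_def)
  qed (use cl in blast)+
  have nd: "nondegenerate_on Z (ind_g \<sigma>) (ind_f \<gamma>)"
    unfolding nondegenerate_on_def
  proof
    fix x assume x: "x \<in> Z"
    hence xX: "x \<in> XX" using sub by blast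
    show "bij_betw (ind_g \<sigma> x) Z Z \<and> bij_betw (ind_f \<gamma> x) Z Z"
      using endo_bij[OF fin sub g_inj[OF xX]] endo_bij[OF fin sub f_inj[OF xX]] cl x by blast
  qed
  have iv: "involutive_on Z (ind_g \<sigma>) (ind_f \<gamma>)"
    unfolding involutive_on_def using g_inv f_inv sub by blast
  show ?thesis unfolding nd_invariant_def nd_inv_solution_def using sub cl braid nd iv by blast
qed


abbreviation "Orb \<equiv> struct_orbit XX (ind_g \<sigma>) (1,1)"

lemma one_in: "(1,1) \<in> XX" using n1 by simp

lemma g_surj: "W \<in> XX \<Longrightarrow> ind_g \<sigma> W ` XX = XX"
  using endo_inj_surj[of XX "ind_g \<sigma> W"] g_into g_inj by blast

lemma orbit_sub: "Orb \<subseteq> XX"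
proof
  fix p assume "p \<in> Orb"
  then show "p \<in> XX"
  proof (induction rule: struct_orbit.induct)
    case base then show ?case by (rule one_in)
  next
    case (gen z x) show ?case by (rule g_into[OF gen(2) gen(3)])
  next
    case (gen_inv z x)
    have "z \<in> ind_g \<sigma> x ` XX" using g_surj[OF gen_inv(2)] gen_inv(3) by (rule ssubst)
    then show ?case by (rule inv_into_into)
  qed
qed

lemma orbit_fclosed: "fclosed Orb"
  unfolding fclosed_def
proof (intro conjI ballI)
  show "Orb \<subseteq> XX" by (rule orbit_sub)
  fix W V assume "W \<in> XX" "V \<in> Orb"
  thus "ind_g \<sigma> W V \<in> Orb" by (intro struct_orbit.gen)
qed

lemma compl_fclosed: "fclosed (XX - Orb)"
  unfolding fclosed_def
proof (intro conjI ballI)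
  fix W V assume W: "W \<in> XX" and V: "V \<in> XX - Orb"
  show "ind_g \<sigma> W V \<in> XX - Orb"
  proof
    show "ind_g \<sigma> W V \<in> XX" using W V by (intro g_into) auto
    show "ind_g \<sigma> W V \<notin> Orb"
    proof
      assume "ind_g \<sigma> W V \<in> Orb"
      hence "inv_into XX (ind_g \<sigma> W) (ind_g \<sigma> W V) \<in> Orb" using W by (rule struct_orbit.gen_inv)
      moreover have "inv_into XX (ind_g \<sigma> W) (ind_g \<sigma> W V) = V"
        using V by (intro inv_into_f_f[OF g_inj[OF W]]) auto
      ultimately show False using V by auto
    qed
  qed
qed auto

lemma i_to_ii: "indecomposable XX (ind_g \<sigma>) (ind_f \<gamma>) \<Longrightarrow> Orb = XX"
proof (rule ccontr)
  assume ind: "indecomposable XX (ind_g \<sigma>) (ind_f \<gamma>)" and ne: "Orb \<noteq> XX"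
  have "decomposable XX (ind_g \<sigma>) (ind_f \<gamma>)"
    unfolding decomposable_def
  proof (intro exI conjI)
    show "Orb \<noteq> {}" using struct_orbit.base[of "(1::nat,1::nat)" XX "ind_g \<sigma>"] by blast
    show "XX - Orb \<noteq> {}" using ne orbit_sub by blast
    show "Orb \<inter> (XX - Orb) = {}" by blast
    show "Orb \<union> (XX - Orb) = XX" using orbit_sub by blast
    show "nd_invariant XX (ind_g \<sigma>) (ind_f \<gamma>) Orb"
      using closed_inv orbit_fclosed compl_fclosed by simp
    show "nd_invariant XX (ind_g \<sigma>) (ind_f \<gamma>) (XX - Orb)"
      using closed_inv[of "XX - Orb"] orbit_fclosed compl_fclosed orbit_sub
      by (simp add: Diff_Diff_Int Int_absorb1)
  qed
  thus False using ind unfolding indecomposable_def by blast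
qed

lemma nd_cl: "nd_invariant Y a b Z \<Longrightarrow> x \<in> Z \<Longrightarrow> y \<in> Z \<Longrightarrow> a x y \<in> Z"
  unfolding nd_invariant_def by blast
lemma nd_bij: "nd_invariant Y a b Z \<Longrightarrow> x \<in> Z \<Longrightarrow> bij_betw (a x) Z Z"
  unfolding nd_invariant_def nd_inv_solution_def nondegenerate_on_def by blast

lemma keep:
  assumes Z1: "nd_invariant XX (ind_g \<sigma>) (ind_f \<gamma>) Z1" and Z2: "nd_invariant XX (ind_g \<sigma>) (ind_f \<gamma>) Z2"
    and d: "Z1 \<inter> Z2 = {}" and u: "Z1 \<union> Z2 = XX"
    and W: "W \<in> XX" and V: "V \<in> Z1"
  shows "ind_g \<sigma> W V \<in> Z1"
proof (cases "W \<in> Z1")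
  case True show ?thesis using nd_cl[OF Z1 True V] .
next
  case False
  have W2: "W \<in> Z2" using W False unfolding u[symmetric] by (simp only: Un_iff) blast
  have bij: "bij_betw (ind_g \<sigma> W) Z2 Z2" by (rule nd_bij[OF Z2 W2])
  have VX: "V \<in> XX" unfolding u[symmetric] using V by (rule UnI1)
  show ?thesis
  proof (rule ccontr)
    assume a: "ind_g \<sigma> W V \<notin> Z1"
    have "ind_g \<sigma> W V \<in> XX" by (rule g_into[OF W VX])
    hence "ind_g \<sigma> W V \<in> Z2" using a unfolding u[symmetric] by (simp only: Un_iff) blast
    hence "ind_g \<sigma> W V \<in> ind_g \<sigma> W ` Z2" using bij unfolding bij_betw_def by (elim conjE) (rule ssubst)
    then obtain V' where V': "V' \<in> Z2" "ind_g \<sigma> W V = ind_g \<sigma> W V'" by (rule imageE)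
    have V'X: "V' \<in> XX" unfolding u[symmetric] using V'(1) by (rule UnI2)
    have "V = V'" by (rule inj_onD[OF g_inj[OF W] V'(2) VX V'X])
    hence "V \<in> Z1 \<inter> Z2" using V V'(1) by (simp only: IntI)
    thus False unfolding d by (rule emptyE)
  qed
qed

lemma orbit_in_part:
  assumes Z1: "nd_invariant XX (ind_g \<sigma>) (ind_f \<gamma>) Z1" and Z2: "nd_invariant XX (ind_g \<sigma>) (ind_f \<gamma>) Z2"
    and d: "Z1 \<inter> Z2 = {}" and u: "Z1 \<union> Z2 = XX" and one: "(1,1) \<in> Z1"
  shows "Orb \<subseteq> Z1"
proof
  have d': "Z2 \<inter> Z1 = {}" using d by (simp only: Int_commute)
  have u': "Z2 \<union> Z1 = XX" using u by (simp only: Un_commute)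
  fix p assume "p \<in> Orb"
  then show "p \<in> Z1"
  proof (induction rule: struct_orbit.induct)
    case base show ?case by (rule one)
  next
    case (gen z x) show ?case by (rule keep[OF Z1 Z2 d u gen(2) gen(3)])
  next
    case (gen_inv z x)
    have zX: "z \<in> XX" unfolding u[symmetric] using gen_inv(3) by (rule UnI1)
    have zX': "z \<in> ind_g \<sigma> x ` XX" using g_surj[OF gen_inv(2)] zX by (rule ssubst)
    let ?v = "inv_into XX (ind_g \<sigma> x) z"
    have vX: "?v \<in> XX" using zX' by (rule inv_into_into)
    have gv: "ind_g \<sigma> x ?v = z" using zX' by (rule f_inv_into_f)
    show ?case
    proof (rule ccontr)
      assume a: "?v \<notin> Z1"
      have "?v \<in> Z2" using vX a unfolding u[symmetric] by (simp only: Un_iff) blast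
      hence "ind_g \<sigma> x ?v \<in> Z2" by (rule keep[OF Z2 Z1 d' u' gen_inv(2)])
      hence "z \<in> Z1 \<inter> Z2" using gv gen_inv(3) by simp
      thus False unfolding d by (rule emptyE)
    qed
  qed
qed

lemma ii_to_i: "Orb = XX \<Longrightarrow> indecomposable XX (ind_g \<sigma>) (ind_f \<gamma>)"
  unfolding indecomposable_def decomposable_def
proof (intro notI, elim exE conjE)
  fix Z1 Z2 assume O: "Orb = XX" and ne: "Z1 \<noteq> {}" "Z2 \<noteq> {}" and d: "Z1 \<inter> Z2 = {}"
    and u: "Z1 \<union> Z2 = XX" and Z1: "nd_invariant XX (ind_g \<sigma>) (ind_f \<gamma>) Z1"
    and Z2: "nd_invariant XX (ind_g \<sigma>) (ind_f \<gamma>) Z2"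
  show False
  proof (cases "(1,1) \<in> Z1")
    case True
    have "Orb \<subseteq> Z1" using orbit_in_part[OF Z1 Z2 d u True] .
    thus False using O ne d u by blast
  next
    case False
    hence "(1,1) \<in> Z2" using one_in u by blast
    hence "Orb \<subseteq> Z2" using orbit_in_part[OF Z2 Z1 _ _] d u by blast
    thus False using O ne d u by blast
  qed
qed

lemma word_in: "set is \<subseteq> {1..n} \<Longrightarrow> word_apply \<sigma> is 1 \<in> {1..n}"
proof (induction "is")
  case Nil show ?case using n1 by (simp add: word_apply_def)
next
  case (Cons i "is")
  have "i \<in> {1..n}" "set is \<subseteq> {1..n}" using Cons.prems by auto
  hence "\<sigma> i (word_apply \<sigma> is 1) \<in> {1..n}" using Cons.IH by (intro sig_in) auto
  thus ?case by (simp add: word_apply_def)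
qed

lemma word_cons: "word_apply \<sigma> (i#is) x = \<sigma> i (word_apply \<sigma> is x)"
  by (simp add: word_apply_def)

definition "WS = {(word_apply \<sigma> is 1, word_apply \<sigma> ks 1) | is ks. length is = length ks \<and> set is \<subseteq> {1..n} \<and> set ks \<subseteq> {1..n}}"

lemma WS_sub: "WS \<subseteq> XX"
  unfolding WS_def using word_in by blast

lemma WS_cl: "W \<in> XX \<Longrightarrow> V \<in> WS \<Longrightarrow> ind_g \<sigma> W V \<in> WS"
proof -
  assume W: "W \<in> XX" and "V \<in> WS"
  then obtain "is" ks where V: "V = (word_apply \<sigma> is 1, word_apply \<sigma> ks 1)" "length is = length ks"
     "set is \<subseteq> {1..n}" "set ks \<subseteq> {1..n}" unfolding WS_def by blast
  have "ind_g \<sigma> W V = (word_apply \<sigma> (fst W # is) 1, word_apply \<sigma> (snd W # ks) 1)"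
    unfolding V(1) ind_g_def word_cons by simp
  moreover have "length (fst W # is) = length (snd W # ks)" "set (fst W # is) \<subseteq> {1..n}" "set (snd W # ks) \<subseteq> {1..n}"
    using V W by auto
  ultimately show ?thesis unfolding WS_def by blast
qed

lemma WS_surj: "W \<in> XX \<Longrightarrow> ind_g \<sigma> W ` WS = WS"
  apply (rule endo_inj_surj)
  using WS_sub finite_subset apply blast
  using WS_cl apply blast
  using inj_on_subset[OF g_inj WS_sub] by blast

lemma orb_WS: "Orb \<subseteq> WS"
proof
  fix p assume "p \<in> Orb"
  then show "p \<in> WS"
  proof (induction rule: struct_orbit.induct)
    case base
    have "(1,1) = (word_apply \<sigma> [] 1, word_apply \<sigma> [] 1)" by (simp add: word_apply_def)
    then show ?case unfolding WS_def by fastforce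
  next
    case (gen z x) then show ?case using WS_cl by blast
  next
    case (gen_inv z x)
    obtain v where v: "v \<in> WS" "z = ind_g \<sigma> x v" using WS_surj[OF gen_inv(2)] gen_inv(3) by blast
    have "inv_into XX (ind_g \<sigma> x) z = v"
      using v inv_into_f_f[OF g_inj[OF gen_inv(2)]] WS_sub by blast
    then show ?case using v by simp
  qed
qed

lemma WS_orb_aux: "length is = length ks \<Longrightarrow> set is \<subseteq> {1..n} \<Longrightarrow> set ks \<subseteq> {1..n} \<Longrightarrow>
   (word_apply \<sigma> is 1, word_apply \<sigma> ks 1) \<in> Orb"
proof (induction "is" ks rule: list_induct2)
  case Nil
  then show ?case using struct_orbit.base by (simp add: word_apply_def)
next
  case (Cons i "is" k ks)
  have "ind_g \<sigma> (i,k) (word_apply \<sigma> is 1, word_apply \<sigma> ks 1) \<in> Orb"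
  proof (rule struct_orbit.gen)
    show "(word_apply \<sigma> is 1, word_apply \<sigma> ks 1) \<in> Orb" using Cons by simp
    show "(i,k) \<in> XX" using Cons.prems by simp
  qed
  moreover have "ind_g \<sigma> (i,k) (word_apply \<sigma> is 1, word_apply \<sigma> ks 1)
      = (word_apply \<sigma> (i # is) 1, word_apply \<sigma> (k # ks) 1)"
    by (simp add: ind_g_def word_cons)
  ultimately show ?case by (metis (no_types))
qed

lemma orb_eq: "Orb = WS"
proof
  show "Orb \<subseteq> WS" by (rule orb_WS)
  show "WS \<subseteq> Orb"
  proof
    fix p assume "p \<in> WS"
    then obtain "is" ks where V: "p = (word_apply \<sigma> is 1, word_apply \<sigma> ks 1)" "length is = length ks"
     "set is \<subseteq> {1..n}" "set ks \<subseteq> {1..n}" unfolding WS_def by blast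
    show "p \<in> Orb" unfolding V(1) by (rule WS_orb_aux[OF V(2-4)])
  qed
qed

lemma WS1: "p \<in> WS \<Longrightarrow> \<exists>is ks. length is = length ks \<and> length is \<ge> 1 \<and> set is \<subseteq> {1..n} \<and> set ks \<subseteq> {1..n}
   \<and> p = (word_apply \<sigma> is 1, word_apply \<sigma> ks 1)"
proof -
  assume p: "p \<in> WS"
  have "p \<in> ind_g \<sigma> (1,1) ` WS" using WS_surj[OF one_in] p by (rule ssubst)
  then obtain v where v: "v \<in> WS" "p = ind_g \<sigma> (1,1) v" by (rule imageE) blast
  then obtain "is" ks where V: "v = (word_apply \<sigma> is 1, word_apply \<sigma> ks 1)" "length is = length ks"
     "set is \<subseteq> {1..n}" "set ks \<subseteq> {1..n}" unfolding WS_def by blast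
  have "p = (word_apply \<sigma> (1 # is) 1, word_apply \<sigma> (1 # ks) 1)"
    unfolding v V(1) ind_g_def word_cons by simp
  moreover have "length (1 # is) = length (1 # ks)" "set (1 # is) \<subseteq> {1..n}" "set (1 # ks) \<subseteq> {1..n}"
    using V n1 by auto
  moreover have "length (1 # is) \<ge> 1" by simp
  ultimately show ?thesis by blast
qed

abbreviation "P3 s m \<equiv> (\<exists>l\<ge>1. \<exists>is ks. length is = l \<and> length ks = l \<and>
               set is \<subseteq> {1..n} \<and> set ks \<subseteq> {1..n} \<and>
               word_apply \<sigma> is 1 = s \<and> word_apply \<sigma> ks 1 = m)"

lemma WS_P3: "(s,m) \<in> WS \<Longrightarrow> P3 s m"
proof -
  assume "(s,m) \<in> WS"
  from WS1[OF this] obtain "is" ks where w: "length is = length ks" "length is \<ge> 1" "set is \<subseteq> {1..n}"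
    "set ks \<subseteq> {1..n}" "(s,m) = (word_apply \<sigma> is 1, word_apply \<sigma> ks 1)" by blast
  have "word_apply \<sigma> is 1 = s" "word_apply \<sigma> ks 1 = m" using w(5) by simp_all
  thus ?thesis using w(1-4) by (intro exI[of _ "length is"] conjI exI) simp_all
qed

lemma P3_WS: "P3 s m \<Longrightarrow> (s,m) \<in> WS"
proof -
  assume "P3 s m"
  then obtain l "is" ks where w: "length is = l" "length ks = l" "set is \<subseteq> {1..n}"
    "set ks \<subseteq> {1..n}" "word_apply \<sigma> is 1 = s" "word_apply \<sigma> ks 1 = m" by blast
  have "length is = length ks" using w by simp
  thus ?thesis unfolding WS_def using w(3-6) by blast
qed

lemma ii_iii: "Orb = XX \<longleftrightarrow> (\<forall>s\<in>{1..n}. \<forall>m\<in>{1..n}. P3 s m)"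
proof
  assume O: "Orb = XX"
  show "\<forall>s\<in>{1..n}. \<forall>m\<in>{1..n}. P3 s m"
  proof (intro ballI)
    fix s m assume "s \<in> {1..n}" "m \<in> {1..n}"
    hence "(s,m) \<in> XX" by (rule mem_Sigma_iff[THEN iffD2, OF conjI])
    hence "(s,m) \<in> Orb" using O by (rule_tac ssubst[OF O])
    hence "(s,m) \<in> WS" using orb_eq by (rule_tac subst[OF orb_eq])
    thus "P3 s m" by (rule WS_P3)
  qed
next
  assume H: "\<forall>s\<in>{1..n}. \<forall>m\<in>{1..n}. P3 s m"
  have "XX \<subseteq> WS"
  proof
    fix p assume p: "p \<in> XX"
    obtain s m where e: "p = (s,m)" by (cases p)
    have "s \<in> {1..n}" "m \<in> {1..n}" using p unfolding e by simp_all
    hence "P3 s m" using H by blast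
    thus "p \<in> WS" unfolding e by (rule P3_WS)
  qed
  thus "Orb = XX" using orb_eq WS_sub by (rule_tac equalityI) simp_all
qed

lemma iii_iv: "(\<forall>s\<in>{1..n}. \<forall>m\<in>{1..n}. P3 s m) \<longleftrightarrow>
           (\<forall>s\<in>{1..n}. \<forall>m\<in>{1..n}. \<exists>l\<ge>1. s \<in> table_column n \<sigma> l \<and> m \<in> table_column n \<sigma> l)"
proof
  assume H: "\<forall>s\<in>{1..n}. \<forall>m\<in>{1..n}. P3 s m"
  show "\<forall>s\<in>{1..n}. \<forall>m\<in>{1..n}. \<exists>l\<ge>1. s \<in> table_column n \<sigma> l \<and> m \<in> table_column n \<sigma> l"
  proof (intro ballI)
    fix s m assume sm: "s \<in> {1..n}" "m \<in> {1..n}"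
    then obtain l "is" ks where w: "l \<ge> 1" "length is = l" "length ks = l" "set is \<subseteq> {1..n}"
      "set ks \<subseteq> {1..n}" "word_apply \<sigma> is 1 = s" "word_apply \<sigma> ks 1 = m" using H by blast
    have "s \<in> table_column n \<sigma> l" unfolding table_column_def using sm(1) w by blast
    moreover have "m \<in> table_column n \<sigma> l" unfolding table_column_def using sm(2) w by blast
    ultimately show "\<exists>l\<ge>1. s \<in> table_column n \<sigma> l \<and> m \<in> table_column n \<sigma> l" using w(1) by blast
  qed
next
  assume H: "\<forall>s\<in>{1..n}. \<forall>m\<in>{1..n}. \<exists>l\<ge>1. s \<in> table_column n \<sigma> l \<and> m \<in> table_column n \<sigma> l"
  show "\<forall>s\<in>{1..n}. \<forall>m\<in>{1..n}. P3 s m"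
  proof (intro ballI)
    fix s m assume sm: "s \<in> {1..n}" "m \<in> {1..n}"
    then obtain l where l: "l \<ge> 1" "s \<in> table_column n \<sigma> l" "m \<in> table_column n \<sigma> l" using H by blast
    obtain "is" where i: "length is = l" "set is \<subseteq> {1..n}" "word_apply \<sigma> is 1 = s"
      using l(2) unfolding table_column_def by blast
    obtain ks where k: "length ks = l" "set ks \<subseteq> {1..n}" "word_apply \<sigma> ks 1 = m"
      using l(3) unfolding table_column_def by blast
    show "P3 s m" using l(1) i k by blast
  qed
qed

end

theorem lemma3p11:
  fixes n :: nat and \<sigma> \<gamma> :: "nat \<Rightarrow> nat \<Rightarrow> nat"
  assumes "n \<ge> 1"
    and "nd_inv_solution {1..n} \<sigma> \<gamma>"
  defines "X2 \<equiv> {1..n} \<times> {1..n}"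
  shows "(indecomposable X2 (ind_g \<sigma>) (ind_f \<gamma>) \<longleftrightarrow> struct_orbit X2 (ind_g \<sigma>) (1,1) = X2)
       \<and> (struct_orbit X2 (ind_g \<sigma>) (1,1) = X2 \<longleftrightarrow>
           (\<forall>s\<in>{1..n}. \<forall>m\<in>{1..n}. \<exists>l\<ge>1. \<exists>is ks. length is = l \<and> length ks = l \<and>
               set is \<subseteq> {1..n} \<and> set ks \<subseteq> {1..n} \<and>
               word_apply \<sigma> is 1 = s \<and> word_apply \<sigma> ks 1 = m))
       \<and> ((\<forall>s\<in>{1..n}. \<forall>m\<in>{1..n}. \<exists>l\<ge>1. \<exists>is ks. length is = l \<and> length ks = l \<and>
               set is \<subseteq> {1..n} \<and> set ks \<subseteq> {1..n} \<and>
               word_apply \<sigma> is 1 = s \<and> word_apply \<sigma> ks 1 = m) \<longleftrightarrow>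
           (\<forall>s\<in>{1..n}. \<forall>m\<in>{1..n}. \<exists>l\<ge>1. s \<in> table_column n \<sigma> l \<and> m \<in> table_column n \<sigma> l))"
  unfolding X2_def
proof (intro conjI)
  show "indecomposable ({1..n} \<times> {1..n}) (ind_g \<sigma>) (ind_f \<gamma>) \<longleftrightarrow>
        struct_orbit ({1..n} \<times> {1..n}) (ind_g \<sigma>) (1,1) = {1..n} \<times> {1..n}"
    using i_to_ii[OF assms(1,2)] ii_to_i[OF assms(1,2)] by (rule iffI)
qed (rule ii_iii[OF assms(1,2)], rule iii_iv[OF assms(1,2)])

end
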